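(* Let $M$ be a matroid on a finite set $E$, and let $P$ and $Q$ be two partitions of $\cup\mathcal{B}(M)$ such that for every $B\in\mathcal{B}(M)$, every $K\in P$ and every $L\in Q$, we have $|B\cap K|=1$ and $|B\cap L|=1$. Then $P=Q$.
   Context: $\mathcal{B}(M)$ denotes the family of bases of $M$ and $\cup\mathcal{B}(M)$ the union of all bases. A partition of a set $U$ is a family of nonempty pairwise disjoint subsets of $U$ whose union is $U$. *)

theory Defs
  imports Main
begin

definition matroid :: "'a set \<Rightarrow> ('a set \<Rightarrow> bool) \<Rightarrow> bool" where
  "matroid E indep \<longleftrightarrow>
     finite E \<and>
     (\<forall>X. indep X \<longrightarrow> X \<subseteq> E) \<and>
     indep {} \<and>
     (\<forall>X Y. indep X \<and> Y \<subseteq> X \<longrightarrow> indep Y) \<and>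
     (\<forall>X Y. indep X \<and> indep Y \<and> card X < card Y \<longrightarrow>
        (\<exists>y \<in> Y - X. indep (insert y X)))"

definition bases :: "'a set \<Rightarrow> ('a set \<Rightarrow> bool) \<Rightarrow> 'a set set" where
  "bases E indep = {B. B \<subseteq> E \<and> indep B \<and> (\<forall>X. indep X \<and> B \<subseteq> X \<longrightarrow> X = B)}"

definition is_partition :: "'a set set \<Rightarrow> 'a set \<Rightarrow> bool" where
  "is_partition P U \<longleftrightarrow>
     (\<forall>K \<in> P. K \<noteq> {}) \<and>
     (\<forall>K \<in> P. \<forall>L \<in> P. K \<noteq> L \<longrightarrow> K \<inter> L = {}) \<and>
     \<Union>P = U"

end

theory Submission
  imports Defs
begin

lemma matroid_aug:
  assumes "matroid E indep" "indep X" "indep Y" "card X < card Y"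
  shows "\<exists>y\<in>Y-X. indep (insert y X)"
proof -
  have h: "\<forall>X Y. indep X \<and> indep Y \<and> card X < card Y \<longrightarrow> (\<exists>y \<in> Y - X. indep (insert y X))"
    using assms(1) unfolding matroid_def by (elim conjE) assumption
  show ?thesis using h assms(2-4) by blast
qed

lemma base_not_less:
  assumes m: "matroid E indep" and c1: "C1 \<in> bases E indep" and c2: "C2 \<in> bases E indep"
  shows "\<not> card C1 < card C2"
proof
  assume "card C1 < card C2"
  moreover have "indep C1" "indep C2" using c1 c2 unfolding bases_def by auto
  ultimately obtain y where y: "y \<in> C2 - C1" "indep (insert y C1)"
    using matroid_aug[OF m] by blast
  have "\<forall>X. indep X \<and> C1 \<subseteq> X \<longrightarrow> X = C1" using c1 unfolding bases_def by auto
  then have "insert y C1 = C1" using y by blast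
  then show False using y by blast
qed

lemma base_card_eq:
  assumes m: "matroid E indep" and b1: "B1 \<in> bases E indep" and b2: "B2 \<in> bases E indep"
  shows "card B1 = card B2"
  using base_not_less[OF m b1 b2] base_not_less[OF m b2 b1] by linarith

lemma extend_base:
  assumes m: "matroid E indep" and X: "indep X" and b: "B \<in> bases E indep"
  shows "\<exists>B'' \<in> bases E indep. X \<subseteq> B'' \<and> B'' \<subseteq> X \<union> B"
proof -
  have fin: "finite E" using m unfolding matroid_def by (elim conjE)
  have sub0: "\<forall>X. indep X \<longrightarrow> X \<subseteq> E" using m unfolding matroid_def by (elim conjE) assumption
  have sub: "\<And>X. indep X \<Longrightarrow> X \<subseteq> E" using sub0 by blast
  note aug = matroid_aug[OF m]
  let ?S = "{Y. indep Y \<and> X \<subseteq> Y \<and> Y \<subseteq> X \<union> B}"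
  have finS: "finite ?S"
  proof -
    have "X \<union> B \<subseteq> E" using sub X b unfolding bases_def by blast
    then have "finite (X \<union> B)" using fin by (rule finite_subset)
    then have "finite (Pow (X \<union> B))" by simp
    then show ?thesis by (rule finite_subset[rotated]) blast
  qed
  have "X \<in> ?S" using X by blast
  then obtain Y where Y: "Y \<in> ?S" and mx: "\<And>Z. Z \<in> ?S \<Longrightarrow> card Z \<le> card Y"
  proof -
    have ne: "card ` ?S \<noteq> {}" using \<open>X \<in> ?S\<close> by blast
    have "Max (card ` ?S) \<in> card ` ?S" using Max_in[OF finite_imageI[OF finS] ne] .
    then obtain Y where Y1: "Y \<in> ?S" and Y2: "card Y = Max (card ` ?S)"
      by (elim imageE) (rule that, assumption, rule sym, assumption)
    have Y3: "card Z \<le> card Y" if "Z \<in> ?S" for Z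
      unfolding Y2 by (rule Max_ge[OF finite_imageI[OF finS]]) (rule imageI[OF that])
    show ?thesis by (rule that[OF Y1 Y3])
  qed
  have "Y \<subseteq> E" using Y sub by blast
  then have finY: "finite Y" using fin by (rule finite_subset)
  have indB: "indep B" using b unfolding bases_def by blast
  have c1: "card B \<le> card Y"
  proof (rule ccontr)
    assume "\<not> ?thesis"
    then have "card Y < card B" by linarith
    then obtain y where "y \<in> B - Y" "indep (insert y Y)" using aug[of Y B] Y indB by blast
    then have "insert y Y \<in> ?S" using Y by blast
    with mx have "card (insert y Y) \<le> card Y" by blast
    then show False using finY \<open>y \<in> B - Y\<close> by simp
  qed
  have "Y \<in> bases E indep"
    unfolding bases_def
  proof (intro CollectI conjI allI impI)
    show "Y \<subseteq> E" "indep Y" using Y sub by blast+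
    fix Z assume Z: "indep Z \<and> Y \<subseteq> Z"
    show "Z = Y"
    proof (rule ccontr)
      assume "Z \<noteq> Y"
      have "Z \<subseteq> E" using Z sub by blast
      then have "finite Z" using fin by (rule finite_subset)
      then have "card Y < card Z" 
        by (rule psubset_card_mono) (use Z \<open>Z \<noteq> Y\<close> in blast)
      with c1 have "card B < card Z" by linarith
      then obtain z where "z \<in> Z - B" "indep (insert z B)" using aug[of B Z] Z indB by blast
      then show False using b unfolding bases_def by blast
    qed
  qed
  then show ?thesis using Y by blast
qed

lemma two_le_card:
  assumes "card A = 1" "x \<in> A" "y \<in> A" shows "x = y"
  using assms by (metis card_1_singletonE singletonD)

lemma key:
  assumes m: "matroid E indep"
    and hP: "\<forall>B \<in> bases E indep. \<forall>K \<in> P. card (B \<inter> K) = 1"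
    and hQ: "\<forall>B \<in> bases E indep. \<forall>L \<in> Q. card (B \<inter> L) = 1"
    and KP: "K \<in> P" and LQ: "L \<in> Q" and xK: "x \<in> K" and xL: "x \<in> L"
    and Ksub: "K \<subseteq> \<Union>(bases E indep)"
  shows "K \<subseteq> L"
proof
  fix y assume yK: "y \<in> K"
  show "y \<in> L"
  proof (rule ccontr)
    assume yL: "y \<notin> L"
    have xy: "x \<noteq> y" using xL yL by blast
    have ss0: "\<forall>X Y. indep X \<and> Y \<subseteq> X \<longrightarrow> indep Y"
      using m unfolding matroid_def by (elim conjE) assumption
    have ss: "\<And>X Y. indep X \<Longrightarrow> Y \<subseteq> X \<Longrightarrow> indep Y" using ss0 by blast
    obtain B' where B': "B' \<in> bases E indep" "y \<in> B'" using yK Ksub by blast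
    have indB': "indep B'" using B' unfolding bases_def by blast
    obtain Bx where Bx: "Bx \<in> bases E indep" "x \<in> Bx" using xK Ksub by blast
    have "indep Bx" using Bx unfolding bases_def by blast
    then have ix: "indep {x}" using ss[of Bx "{x}"] Bx(2) by blast
    show False
    proof (cases "indep {x, y}")
      case True
      then obtain B where B: "B \<in> bases E indep" "{x,y} \<subseteq> B" using extend_base[OF m True B'(1)] by blast
      have "card (B \<inter> K) = 1" using hP B KP by blast
      then show False using two_le_card[of "B \<inter> K" x y] B xK yK xy by blast
    next
      case False
      obtain B'' where B'': "B'' \<in> bases E indep" "{x} \<subseteq> B''" "B'' \<subseteq> {x} \<union> B'"
        using extend_base[OF m ix B'(1)] by blast
      have "indep B''" using B''(1) unfolding bases_def by blast
      then have yn: "y \<notin> B''" using B''(2) False ss[of B'' "{x,y}"] by blast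
      have xn: "x \<notin> B'"
        using two_le_card[of "B' \<inter> K" x y] hP B' KP xK yK xy by blast
      have "B' \<subseteq> E" using B' unfolding bases_def by blast
      moreover have "finite E" using m unfolding matroid_def by (elim conjE)
      ultimately have finB': "finite B'" by (rule finite_subset)
      have sub2: "B'' \<subseteq> insert x (B' - {y})" using B'' yn by blast
      have c0: "card B' > 0" using finB' B'(2) card_gt_0_iff by blast
      have c1: "card (B' - {y}) = card B' - 1" using B'(2) by (simp add: card_Diff_singleton)
      have "card (insert x (B' - {y})) = Suc (card (B' - {y}))"
        using finB' xn by (simp add: card_insert_if)
      then have ci: "card (insert x (B' - {y})) = card B'" using c0 c1 by linarith
      have cb: "card B'' = card B'" using base_card_eq[OF m B''(1) B'(1)] .
      have fi: "finite (insert x (B' - {y}))" using finB' by simp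
      have eq: "B'' = insert x (B' - {y})"
        by (rule card_subset_eq[OF fi sub2]) (use ci cb in linarith)
      have "card (B' \<inter> L) = 1" using hQ B' LQ by blast
      then obtain w where w: "B' \<inter> L = {w}" using card_1_singletonE by blast
      have "w \<noteq> y" using w yL by blast
      then have "w \<in> B''" using eq w by blast
      have "w \<noteq> x" using w xn by blast
      have "card (B'' \<inter> L) = 1" using hQ B''(1) LQ by blast
      then show False using two_le_card[of "B'' \<inter> L" x w] \<open>w \<in> B''\<close> w B''(2) xL \<open>w \<noteq> x\<close> by blast
    qed
  qed
qed

theorem proposition17:
  fixes E :: "'a set" and indep :: "'a set \<Rightarrow> bool" and P Q :: "'a set set"
  assumes "matroid E indep"
    and "is_partition P (\<Union>(bases E indep))"
    and "is_partition Q (\<Union>(bases E indep))"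
    and "\<forall>B \<in> bases E indep. \<forall>K \<in> P. card (B \<inter> K) = 1"
    and "\<forall>B \<in> bases E indep. \<forall>L \<in> Q. card (B \<inter> L) = 1"
  shows "P = Q"
proof -
  have gen: "A \<subseteq> C" if m: "matroid E indep" and pA: "is_partition A (\<Union>(bases E indep))"
    and pC: "is_partition C (\<Union>(bases E indep))"
    and hA: "\<forall>B \<in> bases E indep. \<forall>K \<in> A. card (B \<inter> K) = 1"
    and hC: "\<forall>B \<in> bases E indep. \<forall>L \<in> C. card (B \<inter> L) = 1" for A C
  proof
    fix K assume K: "K \<in> A"
    have neA: "\<forall>K \<in> A. K \<noteq> {}"
      using pA unfolding is_partition_def by (elim conjE)
    have uA: "\<Union>A = \<Union>(bases E indep)"
      using pA unfolding is_partition_def by (elim conjE)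
    have uC: "\<Union>C = \<Union>(bases E indep)"
      using pC unfolding is_partition_def by (elim conjE)
    have "K \<noteq> {}" using neA K by blast
    then obtain x where x: "x \<in> K" by blast
    have Ks: "K \<subseteq> \<Union>(bases E indep)" using K uA by blast
    have "x \<in> \<Union>C" using x Ks uC by blast
    then obtain L where L: "L \<in> C" "x \<in> L" by blast
    have Ls: "L \<subseteq> \<Union>(bases E indep)" using L(1) uC by blast
    have "K \<subseteq> L" using key[OF m hA hC K L(1) x L(2) Ks] .
    moreover have "L \<subseteq> K" using key[OF m hC hA L(1) K L(2) x Ls] .
    ultimately have "K = L" by (rule subset_antisym)
    then show "K \<in> C" using L(1) by simp
  qed
  have "P \<subseteq> Q" by (rule gen[OF assms])
  moreover have "Q \<subseteq> P" by (rule gen[OF assms(1,3,2,5,4)])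
  ultimately show ?thesis by (rule subset_antisym)
qed

end
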